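(* Let $\epsilon$ be a sequence to which Algorithm A (described below) is applied and let $\epsilon'$ be the output. Then for every position $i$, $\epsilon'_i\neq\epsilon_i$ if and only if $i-2$ is an original occurrence of $p$, a transient occurrence of $p$, or an original occurrence of $q$.
   Context: The reduction of an integer word replaces each occurrence of its $k$-th smallest distinct value by $k-1$; a consecutive pattern $\underline{p_1p_2p_3p_4}$ occurs in a sequence at position $i$ if the reduction of its entries in positions $i,\dots,i+3$ equals $p_1p_2p_3p_4$. Let $p=\underline{0102}$ and $q=\underline{0112}$. Algorithm A, on input an integer sequence $\mathrm{seq}=\epsilon_1\cdots\epsilon_n$: let $E_p$, $E_q$ be the sets of positions of occurrences of $p$, resp. $q$, in the input sequence; set $\mathrm{last}:=$ null. For $i=1,2,\dots,n$ in order: let $N_p,N_q$ be the sets of positions of occurrences of $p$, resp. $q$, in the current sequence. If $i-2\in E_p$: set $\mathrm{last}:=\mathrm{seq}[i]$ and $\mathrm{seq}[i]:=\mathrm{seq}[i-1]$. Else if $i-2\in E_q$: set $\mathrm{last}:=\mathrm{seq}[i]$ and $\mathrm{seq}[i]:=\mathrm{seq}[i-2]$. Else if $i-2\in N_p$ or $i-2\in N_q$: swap the values of $\mathrm{seq}[i]$ and $\mathrm{last}$. Output $\mathrm{seq}$. With $\epsilon$ the input and $\epsilon'$ the output: position $i$ is an original occurrence of $p$ if $\epsilon_i=\epsilon_{i+2}$ and $\epsilon_i<\epsilon_{i+1}<\epsilon_{i+3}$; an original occurrence of $q$ if $\epsilon_i<\epsilon_{i+1}=\epsilon_{i+2}<\epsilon_{i+3}$;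 a transient occurrence of $p$ if it is not an original occurrence of $p$ but $\epsilon'_i=\epsilon_{i+2}$ and $\epsilon'_i<\epsilon_{i+1}<\epsilon_{i+3}$. *)

theory Defs
  imports Main
begin

definition pos :: "int list \<Rightarrow> nat \<Rightarrow> int" where
  "pos xs j = xs ! (j - 1)"

definition red :: "int list \<Rightarrow> nat list" where
  "red w = map (\<lambda>x. card {y \<in> set w. y < x}) w"

definition occurs4 :: "nat list \<Rightarrow> int list \<Rightarrow> nat \<Rightarrow> bool" where
  "occurs4 pat xs j \<longleftrightarrow> 1 \<le> j \<and> j + 3 \<le> length xs \<and> red (take 4 (drop (j - 1) xs)) = pat"

abbreviation patP :: "nat list" where "patP \<equiv> [0,1,0,2]"
abbreviation patQ :: "nat list" where "patQ \<equiv> [0,1,1,2]"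

text \<open>One iteration (index i) of Algorithm A; eps is the original input,
  the state is (current sequence, last), with last = None meaning null.\<close>
definition stepA :: "int list \<Rightarrow> nat \<Rightarrow> int list \<times> int option \<Rightarrow> int list \<times> int option" where
  "stepA eps i st = (let s = fst st; lst = snd st in
     if occurs4 patP eps (i - 2) then (s[i - 1 := pos s (i - 1)], Some (pos s i))
     else if occurs4 patQ eps (i - 2) then (s[i - 1 := pos s (i - 2)], Some (pos s i))
     else if occurs4 patP s (i - 2) \<or> occurs4 patQ s (i - 2)
       then (s[i - 1 := the lst], Some (pos s i))
     else (s, lst))"

definition algA :: "int list \<Rightarrow> int list" where
  "algA eps = fst (fold (stepA eps) [1..<length eps + 1] (eps, None))"

definition orig_p :: "int list \<Rightarrow> nat \<Rightarrow> bool" where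
  "orig_p e j \<longleftrightarrow> 1 \<le> j \<and> j + 3 \<le> length e \<and>
     pos e j = pos e (j + 2) \<and> pos e j < pos e (j + 1) \<and> pos e (j + 1) < pos e (j + 3)"

definition orig_q :: "int list \<Rightarrow> nat \<Rightarrow> bool" where
  "orig_q e j \<longleftrightarrow> 1 \<le> j \<and> j + 3 \<le> length e \<and>
     pos e j < pos e (j + 1) \<and> pos e (j + 1) = pos e (j + 2) \<and> pos e (j + 2) < pos e (j + 3)"

definition trans_p :: "int list \<Rightarrow> int list \<Rightarrow> nat \<Rightarrow> bool" where
  "trans_p e e' j \<longleftrightarrow> 1 \<le> j \<and> j + 3 \<le> length e \<and> \<not> orig_p e j \<and>
     pos e' j = pos e (j + 2) \<and> pos e' j < pos e (j + 1) \<and> pos e (j + 1) < pos e (j + 3)"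

end

theory Submission
  imports Defs
begin
lemma red4: "red [a,b,c,d] = [card {y \<in> {a,b,c,d}. y < a}, card {y \<in> {a,b,c,d}. y < b},
   card {y \<in> {a,b,c,d}. y < c}, card {y \<in> {a,b,c,d}. y < d}]"
  unfolding red_def by simp

lemma red4_gen:
  assumes "red [a,b,c,d] = [p0,p1,p2,p3]"
  shows "card {y \<in> {a,b,c,d}. y < a} = p0" "card {y \<in> {a,b,c,d}. y < b} = p1"
        "card {y \<in> {a,b,c,d}. y < c} = p2" "card {y \<in> {a,b,c,d}. y < d} = p3"
  using assms unfolding red4 by simp_all

lemma cz: assumes "card {y \<in> A. y < x} = 0" "finite A" "z \<in> A" shows "\<not> z < (x::int)"
proof
  assume "z < x"
  then have "z \<in> {y \<in> A. y < x}" using assms(3) by blast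
  moreover have "finite {y \<in> A. y < x}" using assms(2) by simp
  ultimately have "card {y \<in> A. y < x} > 0" using card_gt_0_iff by blast
  then show False using assms(1) by linarith
qed

lemma cnz: assumes "card {y \<in> A. y < (x::int)} \<noteq> 0" shows "\<exists>z\<in>A. z < x"
proof (rule ccontr)
  assume "\<not> (\<exists>z\<in>A. z < x)"
  then have "{y \<in> A. y < x} = {}" by blast
  then have "card {y \<in> A. y < x} = 0" by (simp only: card.empty)
  with assms show False by contradiction
qed

lemma cmono: "finite A \<Longrightarrow> (x::int) \<le> z \<Longrightarrow> card {y \<in> A. y < x} \<le> card {y \<in> A. y < z}"
  by (rule card_mono) auto

lemma card2: "finite B \<Longrightarrow> p \<in> B \<Longrightarrow> q \<in> B \<Longrightarrow> (p::int) \<noteq> q \<Longrightarrow> 2 \<le> card B"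
proof -
  assume h: "finite B" "p \<in> B" "q \<in> B" "p \<noteq> q"
  have "{p, q} \<subseteq> B" using h by blast
  then have "card {p,q} \<le> card B" using h(1) by (rule card_mono[rotated])
  moreover have "card {p, q} = 2" using h(4) by simp
  ultimately show ?thesis by simp
qed

lemma red4P: "red [a,b,c,d] = [0,1,0,2] \<longleftrightarrow> a = c \<and> a < b \<and> b < d"
proof
  assume h: "a = c \<and> a < b \<and> b < d"
  have s1: "{y \<in> {a,b,c,d}. y < a} = {}" using h by auto
  have s2: "{y \<in> {a,b,c,d}. y < b} = {a}" using h by auto
  have s3: "{y \<in> {a,b,c,d}. y < c} = {}" using h by auto
  have s4: "{y \<in> {a,b,c,d}. y < d} = {a,b}" using h by auto
  have "a \<noteq> b" using h by simp
  then show "red [a,b,c,d] = [0,1,0,2]" unfolding red4 s1 s2 s3 s4 by simp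
next
  assume h: "red [a,b,c,d] = [0,1,0,2]"
  note r = red4_gen[OF h]
  have fin: "finite {a,b,c,d}" by simp
  have "\<not> c < a" by (rule cz[OF r(1) fin]) simp
  moreover have "\<not> a < c" by (rule cz[OF r(3) fin]) simp
  ultimately have ac: "a = c" by simp
  have "card {y \<in> {a,b,c,d}. y < b} \<noteq> 0" using r(2) by simp
  then obtain z where z: "z \<in> {a,b,c,d}" "z < b" using cnz by blast
  have "\<not> z < a" by (rule cz[OF r(1) fin z(1)])
  then have ab: "a < b" using z(2) by simp
  have bd: "b < d"
  proof (rule ccontr)
    assume "\<not> b < d"
    then have "card {y \<in> {a,b,c,d}. y < d} \<le> card {y \<in> {a,b,c,d}. y < b}"
      by (intro cmono fin) simp
    then show False using r(2) r(4) by simp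
  qed
  show "a = c \<and> a < b \<and> b < d" using ac ab bd by simp
qed

lemma red4Q: "red [a,b,c,d] = [0,1,1,2] \<longleftrightarrow> a < b \<and> b = c \<and> c < d"
proof
  assume h: "a < b \<and> b = c \<and> c < d"
  have s1: "{y \<in> {a,b,c,d}. y < a} = {}" using h by auto
  have s2: "{y \<in> {a,b,c,d}. y < b} = {a}" using h by auto
  have s3: "{y \<in> {a,b,c,d}. y < c} = {a}" using h by auto
  have s4: "{y \<in> {a,b,c,d}. y < d} = {a,b}" using h by auto
  have "a \<noteq> b" using h by simp
  then show "red [a,b,c,d] = [0,1,1,2]" unfolding red4 s1 s2 s3 s4 by simp
next
  assume h: "red [a,b,c,d] = [0,1,1,2]"
  note r = red4_gen[OF h]
  have fin: "finite {a,b,c,d}" by simp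
  have fin2: "finite {y \<in> {a,b,c,d}. y < x}" for x by simp
  have "card {y \<in> {a,b,c,d}. y < b} \<noteq> 0" using r(2) by simp
  then obtain z where z: "z \<in> {a,b,c,d}" "z < b" using cnz by blast
  have "\<not> z < a" by (rule cz[OF r(1) fin z(1)])
  then have ab: "a < b" using z(2) by simp
  have "card {y \<in> {a,b,c,d}. y < c} \<noteq> 0" using r(3) by simp
  then obtain w where w: "w \<in> {a,b,c,d}" "w < c" using cnz by blast
  have "\<not> w < a" by (rule cz[OF r(1) fin w(1)])
  then have ac: "a < c" using w(2) by simp
  have bc: "b = c"
  proof (rule ccontr)
    assume "b \<noteq> c"
    then consider "b < c" | "c < b" by linarith
    then show False
    proof cases
      case 1
      have "2 \<le> card {y \<in> {a,b,c,d}. y < c}"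
        by (rule card2[where p=a and q=b]) (use 1 ab in simp_all)
      then show False using r(3) by simp
    next
      case 2
      have "2 \<le> card {y \<in> {a,b,c,d}. y < b}"
        by (rule card2[where p=a and q=c]) (use 2 ac in simp_all)
      then show False using r(2) by simp
    qed
  qed
  have cd: "c < d"
  proof (rule ccontr)
    assume "\<not> c < d"
    then have "card {y \<in> {a,b,c,d}. y < d} \<le> card {y \<in> {a,b,c,d}. y < c}"
      by (intro cmono fin) simp
    then show False using r(3) r(4) by simp
  qed
  show "a < b \<and> b = c \<and> c < d" using ab bc cd by simp
qed

lemma take4: "j + 3 \<le> length xs \<Longrightarrow> 1 \<le> j \<Longrightarrow>
  take 4 (drop (j - 1) xs) = [pos xs j, pos xs (j+1), pos xs (j+2), pos xs (j+3)]"
  unfolding pos_def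
  apply (rule nth_equalityI)
   apply simp
  apply (auto simp: pos_def numeral_eq_Suc less_Suc_eq)
  done

lemma occP: "occurs4 patP xs j \<longleftrightarrow> 1 \<le> j \<and> j + 3 \<le> length xs \<and>
   pos xs j = pos xs (j + 2) \<and> pos xs j < pos xs (j + 1) \<and> pos xs (j + 1) < pos xs (j + 3)"
  unfolding occurs4_def using take4[of j xs] red4P by auto

lemma occQ: "occurs4 patQ xs j \<longleftrightarrow> 1 \<le> j \<and> j + 3 \<le> length xs \<and>
   pos xs j < pos xs (j + 1) \<and> pos xs (j + 1) = pos xs (j + 2) \<and> pos xs (j + 2) < pos xs (j + 3)"
  unfolding occurs4_def using take4[of j xs] red4Q by auto

definition runA :: "int list \<Rightarrow> nat \<Rightarrow> int list \<times> int option" where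
  "runA e k = fold (stepA e) [1..<k+1] (e, None)"

lemma runA_0: "runA e 0 = (e, None)" by (simp add: runA_def)
lemma runA_Suc: "runA e (Suc k) = stepA e (Suc k) (runA e k)"
  by (simp add: runA_def)

lemma algA_run: "algA e = fst (runA e (length e))" by (simp add: algA_def runA_def)

lemma stepA_len: "length (fst (stepA e i st)) = length (fst st)"
  by (simp add: stepA_def Let_def)

lemma runA_len: "length (fst (runA e k)) = length e"
  by (induction k) (simp_all add: runA_0 runA_Suc stepA_len)

lemma stepA_other: "1 \<le> j \<Longrightarrow> 1 \<le> i \<Longrightarrow> j \<noteq> i \<Longrightarrow> pos (fst (stepA e i st)) j = pos (fst st) j"
  by (simp add: stepA_def Let_def pos_def)

lemma runA_future: "1 \<le> j \<Longrightarrow> k < j \<Longrightarrow> pos (fst (runA e k)) j = pos e j"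
  by (induction k) (simp_all add: runA_0 runA_Suc stepA_other)

lemma runA_past: assumes "1 \<le> j" "j \<le> k" "k \<le> k'" shows "pos (fst (runA e k')) j = pos (fst (runA e k)) j"
  using assms(3)
proof (induction k' rule: dec_induct)
  case base then show ?case by simp
next
  case (step m)
  have "pos (fst (runA e (Suc m))) j = pos (fst (runA e m)) j"
    unfolding runA_Suc by (rule stepA_other) (use assms step.hyps in auto)
  then show ?case using step.IH by simp
qed


definition Ov :: "int list \<Rightarrow> nat \<Rightarrow> int" where "Ov e j = pos (algA e) j"
definition LL :: "int list \<Rightarrow> nat \<Rightarrow> int option" where "LL e k = snd (runA e k)"
definition pP :: "int list \<Rightarrow> nat \<Rightarrow> bool" where
  "pP e i \<longleftrightarrow> 3 \<le> i \<and> i + 1 \<le> length e \<and> Ov e (i-2) = pos e i \<and> Ov e (i-2) < Ov e (i-1) \<and> Ov e (i-1) < pos e (i+1)"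
definition pQ :: "int list \<Rightarrow> nat \<Rightarrow> bool" where
  "pQ e i \<longleftrightarrow> 3 \<le> i \<and> i + 1 \<le> length e \<and> Ov e (i-2) < Ov e (i-1) \<and> Ov e (i-1) = pos e i \<and> pos e i < pos e (i+1)"
definition EP :: "int list \<Rightarrow> nat \<Rightarrow> bool" where "EP e i \<longleftrightarrow> orig_p e (i-2)"
definition EQ :: "int list \<Rightarrow> nat \<Rightarrow> bool" where "EQ e i \<longleftrightarrow> \<not> orig_p e (i-2) \<and> orig_q e (i-2)"
definition NN :: "int list \<Rightarrow> nat \<Rightarrow> bool" where
  "NN e i \<longleftrightarrow> \<not> orig_p e (i-2) \<and> \<not> orig_q e (i-2) \<and> (pP e i \<or> pQ e i)"
definition md :: "int list \<Rightarrow> nat \<Rightarrow> bool" where "md e i \<longleftrightarrow> EP e i \<or> EQ e i \<or> NN e i"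

lemma occ_small: "\<not> 3 \<le> (i::nat) \<Longrightarrow> \<not> occurs4 pat xs (i-2)"
  by (auto simp: occurs4_def)

lemma occP': assumes "3 \<le> (i::nat)"
  shows "occurs4 patP xs (i-2) \<longleftrightarrow> i + 1 \<le> length xs \<and> pos xs (i-2) = pos xs i \<and>
   pos xs (i-2) < pos xs (i-1) \<and> pos xs (i-1) < pos xs (i+1)"
proof -
  obtain m where m: "i = m + 3" using assms by (metis le_add_diff_inverse2)
  show ?thesis unfolding occP m by (simp add: numeral_eq_Suc)
qed

lemma occQ': assumes "3 \<le> (i::nat)"
  shows "occurs4 patQ xs (i-2) \<longleftrightarrow> i + 1 \<le> length xs \<and> pos xs (i-2) < pos xs (i-1) \<and>
   pos xs (i-1) = pos xs i \<and> pos xs i < pos xs (i+1)"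
proof -
  obtain m where m: "i = m + 3" using assms by (metis le_add_diff_inverse2)
  show ?thesis unfolding occQ m by (simp add: numeral_eq_Suc)
qed

lemma eP: "occurs4 patP e j \<longleftrightarrow> orig_p e j" unfolding occP orig_p_def by (rule refl)
lemma eQ: "occurs4 patQ e j \<longleftrightarrow> orig_q e j" unfolding occQ orig_q_def by (rule refl)

lemma origp_iff: "orig_p e (i-2) \<longleftrightarrow> 3 \<le> i \<and> i + 1 \<le> length e \<and> pos e (i-2) = pos e i \<and>
   pos e (i-2) < pos e (i-1) \<and> pos e (i-1) < pos e (i+1)"
proof (cases "3 \<le> i")
  case True show ?thesis unfolding eP[symmetric] occP'[OF True] using True by simp
qed (auto simp: orig_p_def)

lemma origq_iff: "orig_q e (i-2) \<longleftrightarrow> 3 \<le> i \<and> i + 1 \<le> length e \<and> pos e (i-2) < pos e (i-1) \<and>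
   pos e (i-1) = pos e i \<and> pos e i < pos e (i+1)"
proof (cases "3 \<le> i")
  case True show ?thesis unfolding eQ[symmetric] occQ'[OF True] using True by simp
qed (auto simp: orig_q_def)

lemma transp_iff: "trans_p e (algA e) (i-2) \<longleftrightarrow> 3 \<le> i \<and> i + 1 \<le> length e \<and> \<not> orig_p e (i-2) \<and>
   Ov e (i-2) = pos e i \<and> Ov e (i-2) < pos e (i-1) \<and> pos e (i-1) < pos e (i+1)"
proof (cases "3 \<le> i")
  case True
  obtain m where m: "i = m + 3" using True by (metis le_add_diff_inverse2)
  show ?thesis unfolding trans_p_def Ov_def m by (simp add: numeral_eq_Suc)
qed (auto simp: trans_p_def)

lemma Ov_run: "1 \<le> j \<Longrightarrow> j \<le> k \<Longrightarrow> k \<le> length e \<Longrightarrow> pos (fst (runA e k)) j = Ov e j"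
  unfolding Ov_def algA_run by (rule runA_past[symmetric]) auto

lemma step_main:
  assumes i1: "1 \<le> i" and iN: "i \<le> length e"
  shows "Ov e i = (if orig_p e (i-2) then Ov e (i-1) else if orig_q e (i-2) then Ov e (i-2)
           else if pP e i \<or> pQ e i then the (LL e (i-1)) else pos e i)
       \<and> LL e i = (if orig_p e (i-2) \<or> orig_q e (i-2) \<or> pP e i \<or> pQ e i then Some (pos e i) else LL e (i-1))"
proof -
  define st where "st = runA e (i-1)"
  define s where "s = fst st"
  have run_i: "runA e i = stepA e i st"
    using runA_Suc[of e "i-1"] i1 unfolding st_def by simp
  have slen: "length s = length e" unfolding s_def st_def by (simp add: runA_len)
  have s_i: "pos s i = pos e i" unfolding s_def st_def by (rule runA_future) (use i1 in auto)
  have s_i1: "pos s (i+1) = pos e (i+1)" unfolding s_def st_def by (rule runA_future) (use i1 in auto)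
  have s_m1: "pos s (i-1) = Ov e (i-1)" if "3 \<le> i" unfolding s_def st_def
    by (rule Ov_run) (use that iN in auto)
  have s_m2: "pos s (i-2) = Ov e (i-2)" if "3 \<le> i" unfolding s_def st_def
    by (rule Ov_run) (use that iN in auto)
  have oP: "occurs4 patP s (i-2) \<longleftrightarrow> pP e i"
  proof (cases "3 \<le> i")
    case True show ?thesis unfolding occP'[OF True] pP_def slen s_i s_i1 s_m1[OF True] s_m2[OF True]
      using True by simp
  qed (auto simp: occurs4_def pP_def)
  have oQ: "occurs4 patQ s (i-2) \<longleftrightarrow> pQ e i"
  proof (cases "3 \<le> i")
    case True show ?thesis unfolding occQ'[OF True] pQ_def slen s_i s_i1 s_m1[OF True] s_m2[OF True]
      using True by simp
  qed (auto simp: occurs4_def pQ_def)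
  have O_i: "Ov e i = pos (fst (runA e i)) i" by (rule Ov_run[symmetric]) (use i1 iN in auto)
  have upd: "pos (s[i - 1 := v]) i = v" for v using i1 iN slen by (simp add: pos_def)
  have p3: "orig_p e (i-2) \<Longrightarrow> 3 \<le> i" "orig_q e (i-2) \<Longrightarrow> 3 \<le> i"
    by (auto simp: origp_iff origq_iff)
  have stp: "stepA e i st = (if orig_p e (i-2) then (s[i-1 := pos s (i-1)], Some (pos s i))
      else if orig_q e (i-2) then (s[i-1 := pos s (i-2)], Some (pos s i))
      else if pP e i \<or> pQ e i then (s[i-1 := the (snd st)], Some (pos s i)) else (s, snd st))"
    unfolding stepA_def Let_def s_def[symmetric] oP oQ unfolding eP eQ by (rule refl)
  have LLm: "LL e (i-1) = snd st" unfolding LL_def st_def by (rule refl)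
  show ?thesis
  proof (cases "orig_p e (i-2)")
    case True
    then have t3: "3 \<le> i" using p3 by blast
    show ?thesis unfolding O_i LL_def run_i stp using True
      by (simp only: if_True upd s_m1[OF t3] s_i simp_thms prod.sel)
  next
    case F1: False
    show ?thesis
    proof (cases "orig_q e (i-2)")
      case True
      then have t3: "3 \<le> i" using p3 by blast
      show ?thesis unfolding O_i LL_def run_i stp using F1 True
        by (simp only: if_True if_False upd s_m2[OF t3] s_i simp_thms prod.sel)
    next
      case F2: False
      show ?thesis
      proof (cases "pP e i \<or> pQ e i")
        case True
        show ?thesis unfolding O_i LLm unfolding LL_def run_i stp using F1 F2 True
          by (simp only: if_True if_False upd s_i simp_thms prod.sel)
      next
        case F3: False
        have "Ov e i = pos s i" unfolding O_i run_i stp using F1 F2 F3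
          by (simp only: if_True if_False simp_thms prod.sel)
        moreover have "LL e i = LL e (i-1)" unfolding LLm unfolding LL_def run_i stp using F1 F2 F3
          by (simp only: if_True if_False simp_thms prod.sel)
        ultimately show ?thesis using F1 F2 F3 s_i by simp
      qed
    qed
  qed
qed

lemma stepEP: assumes "1 \<le> i" "i \<le> length e" "EP e i"
  shows "Ov e i = Ov e (i-1) \<and> LL e i = Some (pos e i)"
proof -
  have c: "orig_p e (i-2)" using assms(3) unfolding EP_def .
  then have c4: "orig_p e (i-2) \<or> orig_q e (i-2) \<or> pP e i \<or> pQ e i" by blast
  show ?thesis using step_main[OF assms(1,2)] unfolding if_P[OF c] if_P[OF c4] .
qed

lemma stepEQ: assumes "1 \<le> i" "i \<le> length e" "EQ e i"
  shows "Ov e i = Ov e (i-2) \<and> LL e i = Some (pos e i)"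
proof -
  have c: "\<not> orig_p e (i-2)" "orig_q e (i-2)" using assms(3) unfolding EQ_def by blast+
  then have c4: "orig_p e (i-2) \<or> orig_q e (i-2) \<or> pP e i \<or> pQ e i" by blast
  show ?thesis using step_main[OF assms(1,2)] unfolding if_not_P[OF c(1)] if_P[OF c(2)] if_P[OF c4] .
qed

lemma stepNN: assumes "1 \<le> i" "i \<le> length e" "NN e i"
  shows "Ov e i = the (LL e (i-1)) \<and> LL e i = Some (pos e i)"
proof -
  have c: "\<not> orig_p e (i-2)" "\<not> orig_q e (i-2)" "pP e i \<or> pQ e i" using assms(3) unfolding NN_def by blast+
  then have c4: "orig_p e (i-2) \<or> orig_q e (i-2) \<or> pP e i \<or> pQ e i" by blast
  show ?thesis using step_main[OF assms(1,2)]
    unfolding if_not_P[OF c(1)] if_not_P[OF c(2)] if_P[OF c(3)] if_P[OF c4] .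
qed

lemma stepNone: assumes "1 \<le> i" "i \<le> length e" "\<not> md e i"
  shows "Ov e i = pos e i \<and> LL e i = LL e (i-1)"
proof -
  have c: "\<not> orig_p e (i-2)" "\<not> orig_q e (i-2)" "\<not> (pP e i \<or> pQ e i)"
    using assms(3) unfolding md_def EP_def EQ_def NN_def by blast+
  then have c4: "\<not> (orig_p e (i-2) \<or> orig_q e (i-2) \<or> pP e i \<or> pQ e i)" by blast
  show ?thesis using step_main[OF assms(1,2)]
    unfolding if_not_P[OF c(1)] if_not_P[OF c(2)] if_not_P[OF c(3)] if_not_P[OF c4] .
qed

lemma md_LL: "1 \<le> i \<Longrightarrow> i \<le> length e \<Longrightarrow> md e i \<Longrightarrow> LL e i = Some (pos e i)"
  using stepEP stepEQ stepNN unfolding md_def by blast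

lemma md_cases: "md e k \<Longrightarrow> orig_p e (k-2) \<or> orig_q e (k-2) \<or> pP e k \<or> pQ e k"
  unfolding md_def EP_def EQ_def NN_def by blast

lemma md3: "md e k \<Longrightarrow> 3 \<le> k \<and> k + 1 \<le> length e"
  by (drule md_cases, elim disjE, simp_all add: origp_iff origq_iff pP_def pQ_def)

lemma M: "md e k \<Longrightarrow> k + 1 \<le> length e \<and> pos e k < pos e (k+1)"
  by (drule md_cases, elim disjE, auto simp add: origp_iff origq_iff pP_def pQ_def)

lemma M': "md e k \<Longrightarrow> pos e k < pos e (Suc k)"
  using M[of e k] by simp

lemma get3: "3 \<le> (i::nat) \<Longrightarrow> \<exists>m. i = Suc (Suc (Suc m))"
  by (rule exI[of _ "i - 3"]) simp

lemma AI:
  assumes "1 \<le> i" "i \<le> length e"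
  shows "(NN e i \<longrightarrow> \<not> md e (i-1) \<and> md e (i-2) \<and> pP e i \<and> LL e (i-1) = Some (pos e (i-2)))
       \<and> (i + 1 \<le> length e \<and> pos e i < pos e (i+1) \<longrightarrow> Ov e i < pos e (i+1))"
  using assms
proof (induction i rule: less_induct)
  case (less i)
  have partA: "\<not> md e (i-1) \<and> md e (i-2) \<and> pP e i \<and> LL e (i-1) = Some (pos e (i-2))" if nn: "NN e i"
  proof -
    have mdi: "md e i" using nn unfolding md_def by blast
    have i3: "3 \<le> i" and iN: "i + 1 \<le> length e" using md3[OF mdi] by simp_all
    obtain m where i: "i = Suc (Suc (Suc m))" using get3[OF i3] by blast
    have nN: "Suc (Suc (Suc (Suc m))) \<le> length e" using iN i by simp
    have b: "1 \<le> Suc m" "Suc m \<le> length e" "1 \<le> Suc (Suc m)" "Suc (Suc m) \<le> length e"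
      using nN by auto
    have nop: "\<not> orig_p e (Suc m)" and noq: "\<not> orig_q e (Suc m)"
      and pq: "pP e (Suc (Suc (Suc m))) \<or> pQ e (Suc (Suc (Suc m)))"
      using nn unfolding i NN_def by simp_all
    have pqx: "Ov e (Suc m) < Ov e (Suc (Suc m))" using pq unfolding pP_def pQ_def by (auto simp: numeral_eq_Suc)
    have nm1: "\<not> md e (Suc (Suc m))"
    proof
      assume h: "md e (Suc (Suc m))"
      consider "EP e (Suc (Suc m))" | "EQ e (Suc (Suc m))" | "NN e (Suc (Suc m))"
        using h unfolding md_def by blast
      then show False
      proof cases
        case 1
        have "Ov e (Suc (Suc m)) = Ov e (Suc m)" using stepEP[OF b(3,4) 1] by simp
        then show False using pqx by simp
      next
        case 2
        have oq: "orig_q e m" using 2 unfolding EQ_def by simp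
        then have m1: "1 \<le> m" and q: "pos e m < pos e (Suc m)" "pos e (Suc m) = pos e (Suc (Suc m))"
          "pos e (Suc (Suc m)) < pos e (Suc (Suc (Suc m)))"
          unfolding orig_q_def by (simp_all add: numeral_eq_Suc)
        have o1: "Ov e (Suc (Suc m)) = Ov e m" using stepEQ[OF b(3,4) 2] by simp
        have ih: "m + 1 \<le> length e \<and> pos e m < pos e (m+1) \<longrightarrow> Ov e m < pos e (m+1)"
          by (rule conjunct2[OF less.IH]) (use i m1 nN in auto)
        have "Ov e m < pos e (Suc m)" using ih q nN by simp
        then show False using pq o1 q unfolding pP_def pQ_def by (auto simp: numeral_eq_Suc)
      next
        case 3
        have ih: "NN e (Suc (Suc m)) \<longrightarrow> \<not> md e (Suc (Suc m) - 1) \<and> md e (Suc (Suc m) - 2) \<and>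
            pP e (Suc (Suc m)) \<and> LL e (Suc (Suc m) - 1) = Some (pos e (Suc (Suc m) - 2))"
          by (rule conjunct1[OF less.IH]) (use i nN in auto)
        then have a: "\<not> md e (Suc m)" "md e m" "pP e (Suc (Suc m))" "LL e (Suc m) = Some (pos e m)"
          using 3 by simp_all
        have o2: "Ov e (Suc m) = pos e (Suc m)" using stepNone[OF b(1,2) a(1)] by simp
        have o1: "Ov e (Suc (Suc m)) = pos e m" using stepNN[OF b(3,4) 3] a(4) by simp
        have p1: "Ov e (Suc m) < pos e (Suc (Suc (Suc m)))" using a(3) unfolding pP_def by (simp add: numeral_eq_Suc)
        have m3: "pos e m < pos e (Suc m)" using M'[OF a(2)] .
        show False using pq p1 o1 o2 m3 unfolding pP_def pQ_def by (auto simp: numeral_eq_Suc)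
      qed
    qed
    have o1: "Ov e (Suc (Suc m)) = pos e (Suc (Suc m))" and l1: "LL e (Suc (Suc m)) = LL e (Suc m)"
      using stepNone[OF b(3,4) nm1] by simp_all
    have m2: "md e (Suc m)"
    proof (rule ccontr)
      assume nm2: "\<not> md e (Suc m)"
      have o2: "Ov e (Suc m) = pos e (Suc m)" using stepNone[OF b(1,2) nm2] by simp
      have "pP e (Suc (Suc (Suc m))) \<Longrightarrow> orig_p e (Suc m)"
        using o1 o2 nN unfolding pP_def orig_p_def by (simp add: numeral_eq_Suc)
      moreover have "pQ e (Suc (Suc (Suc m))) \<Longrightarrow> orig_q e (Suc m)"
        using o1 o2 nN unfolding pQ_def orig_q_def by (simp add: numeral_eq_Suc)
      ultimately show False using pq nop noq by blast
    qed
    have l2: "LL e (Suc m) = Some (pos e (Suc m))" using md_LL[OF b(1,2) m2] .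
    have pp: "pP e (Suc (Suc (Suc m)))"
    proof (rule ccontr)
      assume "\<not> pP e (Suc (Suc (Suc m)))"
      then have q: "pQ e (Suc (Suc (Suc m)))" using pq by blast
      have "pos e (Suc m) < pos e (Suc (Suc m))" using M'[OF m2] .
      then have "orig_q e (Suc m)" using q o1 nN unfolding pQ_def orig_q_def by (simp add: numeral_eq_Suc)
      then show False using noq by blast
    qed
    show ?thesis unfolding i using nm1 m2 pp l1 l2 by simp
  qed
  have partI: "Ov e i < pos e (i+1)" if iN: "i + 1 \<le> length e" and lt: "pos e i < pos e (i+1)"
  proof (cases "md e i")
    case False
    then show ?thesis using stepNone[OF less.prems False] lt by simp
  next
    case True
    have i3: "3 \<le> i" using md3[OF True] by simp
    obtain m where i: "i = Suc (Suc (Suc m))" using get3[OF i3] by blast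
    have nN: "Suc (Suc (Suc (Suc m))) \<le> length e" using iN i by simp
    have b: "1 \<le> Suc m" "Suc m \<le> length e" "1 \<le> Suc (Suc m)" "Suc (Suc m) \<le> length e"
      using nN by auto
    consider "EP e i" | "EQ e i" | "NN e i" using True unfolding md_def by blast
    then show ?thesis
    proof cases
      case 1
      have op: "pos e (Suc m) = pos e (Suc (Suc (Suc m)))" "pos e (Suc m) < pos e (Suc (Suc m))"
        "pos e (Suc (Suc m)) < pos e (Suc (Suc (Suc (Suc m))))"
        using 1 unfolding i EP_def orig_p_def by (simp_all add: numeral_eq_Suc)
      have nm: "\<not> md e (Suc (Suc m))"
      proof
        assume "md e (Suc (Suc m))"
        from M'[OF this] have "pos e (Suc (Suc m)) < pos e (Suc (Suc (Suc m)))" .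
        then show False using op by simp
      qed
      have "Ov e (Suc (Suc m)) = pos e (Suc (Suc m))" using stepNone[OF b(3,4) nm] by simp
      moreover have "Ov e i = Ov e (Suc (Suc m))" using stepEP[OF less.prems 1] unfolding i by simp
      ultimately show ?thesis using op unfolding i by simp
    next
      case 2
      have oq: "pos e (Suc m) < pos e (Suc (Suc m))" "pos e (Suc (Suc m)) = pos e (Suc (Suc (Suc m)))"
        using 2 unfolding i EQ_def orig_q_def by (simp_all add: numeral_eq_Suc)
      have ih: "Suc m + 1 \<le> length e \<and> pos e (Suc m) < pos e (Suc m + 1) \<longrightarrow> Ov e (Suc m) < pos e (Suc m + 1)"
        by (rule conjunct2[OF less.IH]) (use i nN in auto)
      have "Ov e (Suc m) < pos e (Suc (Suc m))" using ih oq nN by simp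
      moreover have "Ov e i = Ov e (Suc m)" using stepEQ[OF less.prems 2] unfolding i by simp
      ultimately show ?thesis using oq lt unfolding i by simp
    next
      case 3
      from partA[OF 3] have a: "\<not> md e (Suc (Suc m))" "md e (Suc m)" "pP e (Suc (Suc (Suc m)))"
        "LL e (Suc (Suc m)) = Some (pos e (Suc m))"
        unfolding i by simp_all
      have "Ov e i = pos e (Suc m)" using stepNN[OF less.prems 3] a(4) unfolding i by simp
      moreover have "pos e (Suc m) < pos e (Suc (Suc m))" using M'[OF a(2)] .
      moreover have "Ov e (Suc (Suc m)) = pos e (Suc (Suc m))" using stepNone[OF b(3,4) a(1)] by simp
      moreover have "Ov e (Suc (Suc m)) < pos e (Suc (Suc (Suc (Suc m))))" using a(3) unfolding pP_def by (simp add: numeral_eq_Suc)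
      ultimately show ?thesis unfolding i by simp
    qed
  qed
  show ?case using partA partI by blast
qed

lemma lemA: assumes "1 \<le> i" "i \<le> length e" "NN e i"
  shows "\<not> md e (i-1) \<and> md e (i-2) \<and> pP e i \<and> LL e (i-1) = Some (pos e (i-2))"
proof -
  have "NN e i \<longrightarrow> \<not> md e (i-1) \<and> md e (i-2) \<and> pP e i \<and> LL e (i-1) = Some (pos e (i-2))"
    by (rule conjunct1[OF AI[OF assms(1,2)]])
  then show ?thesis using assms(3) by (rule mp)
qed

lemma lemI: assumes "1 \<le> i" "i + 1 \<le> length e" "pos e i < pos e (i+1)" shows "Ov e i < pos e (i+1)"
proof -
  have "i \<le> length e" using assms(2) by simp
  then have "i + 1 \<le> length e \<and> pos e i < pos e (i+1) \<longrightarrow> Ov e i < pos e (i+1)"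
    by (rule conjunct2[OF AI[OF assms(1)]])
  then show ?thesis using assms(2,3) by simp
qed

lemma lemC: "1 \<le> k \<Longrightarrow> k \<le> length e \<Longrightarrow> md e k \<Longrightarrow> Ov e k \<noteq> pos e k"
proof (induction k rule: less_induct)
  case (less k)
  have k3: "3 \<le> k" and kN: "k + 1 \<le> length e" using md3[OF less.prems(3)] by simp_all
  obtain m where k: "k = Suc (Suc (Suc m))" using get3[OF k3] by blast
  have nN: "Suc (Suc (Suc (Suc m))) \<le> length e" using kN k by simp
  have b: "1 \<le> Suc m" "Suc m \<le> length e" "1 \<le> Suc (Suc m)" "Suc (Suc m) \<le> length e"
    using nN by auto
  consider "EP e k" | "EQ e k" | "NN e k" using less.prems(3) unfolding md_def by blast
  then show ?case
  proof cases
    case 1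
    have op: "pos e (Suc m) = pos e (Suc (Suc (Suc m)))" "pos e (Suc m) < pos e (Suc (Suc m))"
      using 1 unfolding k EP_def orig_p_def by (simp_all add: numeral_eq_Suc)
    have nm: "\<not> md e (Suc (Suc m))"
    proof
      assume "md e (Suc (Suc m))"
      from M'[OF this] have "pos e (Suc (Suc m)) < pos e (Suc (Suc (Suc m)))" .
      then show False using op by simp
    qed
    have "Ov e (Suc (Suc m)) = pos e (Suc (Suc m))" using stepNone[OF b(3,4) nm] by simp
    moreover have "Ov e k = Ov e (Suc (Suc m))" using stepEP[OF less.prems(1,2) 1] unfolding k by simp
    ultimately show ?thesis using op unfolding k by simp
  next
    case 2
    have oq: "pos e (Suc m) < pos e (Suc (Suc m))" "pos e (Suc (Suc m)) = pos e (Suc (Suc (Suc m)))"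
      using 2 unfolding k EQ_def orig_q_def by (simp_all add: numeral_eq_Suc)
    have "Ov e (Suc m) < pos e (Suc m + 1)"
      by (rule lemI) (use oq nN in simp_all)
    moreover have "Ov e k = Ov e (Suc m)" using stepEQ[OF less.prems(1,2) 2] unfolding k by simp
    ultimately show ?thesis using oq unfolding k by simp
  next
    case 3
    have a: "\<not> md e (Suc (Suc m))" "md e (Suc m)" "pP e (Suc (Suc (Suc m)))"
      "LL e (Suc (Suc m)) = Some (pos e (Suc m))"
      using lemA[OF less.prems(1,2) 3] unfolding k by simp_all
    have "Ov e k = pos e (Suc m)" using stepNN[OF less.prems(1,2) 3] a(4) unfolding k by simp
    moreover have "Ov e (Suc m) = pos e (Suc (Suc (Suc m)))" using a(3) unfolding pP_def by (simp add: numeral_eq_Suc)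
    moreover have "Ov e (Suc m) \<noteq> pos e (Suc m)"
      by (rule less.IH[OF _ b(1,2) a(2)]) (use k in simp)
    ultimately show ?thesis unfolding k by simp
  qed
qed

theorem lemma6:
  fixes eps :: "int list" and i :: nat
  assumes "1 \<le> i" and "i \<le> length eps"
  shows "pos (algA eps) i \<noteq> pos eps i \<longleftrightarrow>
           (orig_p eps (i - 2) \<or> trans_p eps (algA eps) (i - 2) \<or> orig_q eps (i - 2))"
proof
  assume h: "pos (algA eps) i \<noteq> pos eps i"
  then have ne: "Ov eps i \<noteq> pos eps i" by (simp add: Ov_def)
  have md: "md eps i"
  proof (rule ccontr)
    assume "\<not> md eps i"
    from stepNone[OF assms this] ne show False by simp
  qed
  consider "EP eps i" | "EQ eps i" | "NN eps i" using md unfolding md_def by blast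
  then show "orig_p eps (i - 2) \<or> trans_p eps (algA eps) (i - 2) \<or> orig_q eps (i - 2)"
  proof cases
    case 1 then show ?thesis unfolding EP_def by blast
  next
    case 2 then show ?thesis unfolding EQ_def by blast
  next
    case 3
    have i3: "3 \<le> i" and iN: "i + 1 \<le> length eps" using md3[OF md] by simp_all
    obtain m where i: "i = Suc (Suc (Suc m))" using get3[OF i3] by blast
    have nN: "Suc (Suc (Suc (Suc m))) \<le> length eps" using iN i by simp
    have b: "1 \<le> Suc (Suc m)" "Suc (Suc m) \<le> length eps" using nN by auto
    have a: "\<not> md eps (Suc (Suc m))" "pP eps (Suc (Suc (Suc m)))"
      using lemA[OF assms 3] unfolding i by simp_all
    have o1: "Ov eps (Suc (Suc m)) = pos eps (Suc (Suc m))" using stepNone[OF b a(1)] by simp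
    have np: "\<not> orig_p eps (Suc m)" using 3 unfolding i NN_def by simp
    have "trans_p eps (algA eps) (i - 2)"
      unfolding i trans_p_def using a(2) np o1 nN by (simp add: pP_def Ov_def numeral_eq_Suc)
    then show ?thesis by blast
  qed
next
  assume h: "orig_p eps (i - 2) \<or> trans_p eps (algA eps) (i - 2) \<or> orig_q eps (i - 2)"
  have md: "md eps i"
  proof (cases "orig_p eps (i - 2) \<or> orig_q eps (i - 2)")
    case True then show ?thesis unfolding md_def EP_def EQ_def by blast
  next
    case False
    then have t: "trans_p eps (algA eps) (i - 2)" using h by blast
    then have "1 \<le> i - 2" unfolding trans_p_def by blast
    then have i3: "3 \<le> i" by simp
    obtain m where i: "i = Suc (Suc (Suc m))" using get3[OF i3] by blast
    have t': "Suc (Suc (Suc (Suc m))) \<le> length eps" "Ov eps (Suc m) = pos eps (Suc (Suc (Suc m)))"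
       "Ov eps (Suc m) < pos eps (Suc (Suc m))" "pos eps (Suc (Suc m)) < pos eps (Suc (Suc (Suc (Suc m))))"
      using t unfolding i trans_p_def Ov_def by (simp_all add: numeral_eq_Suc)
    have b: "1 \<le> Suc (Suc m)" "Suc (Suc m) \<le> length eps" using t'(1) by auto
    have nm: "\<not> md eps (Suc (Suc m))"
    proof
      assume "md eps (Suc (Suc m))"
      from M'[OF this] have "pos eps (Suc (Suc m)) < pos eps (Suc (Suc (Suc m)))" .
      then show False using t' by simp
    qed
    have o1: "Ov eps (Suc (Suc m)) = pos eps (Suc (Suc m))" using stepNone[OF b nm] by simp
    have "pP eps (Suc (Suc (Suc m)))" unfolding pP_def using t' o1 by (simp add: numeral_eq_Suc)
    then have "NN eps i" unfolding NN_def i using False unfolding i by simp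
    then show ?thesis unfolding md_def by blast
  qed
  from lemC[OF assms md] show "pos (algA eps) i \<noteq> pos eps i" by (simp add: Ov_def)
qed

end
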